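(* Let $M\ge4$ be even and $1<\alpha\le2$. Then every eigenvalue $\lambda_{\tau(T_1)}$ of the $\tau$-matrix approximation $\tau(T_1)=T_1-\mathrm{HC}(T_1)$ satisfies $$\frac{2\Delta t\,\theta}{(\mathrm{b}-\mathrm{a})^{\alpha}}<\lambda_{\tau(T_1)}<\frac{2\Delta t}{h^{\alpha}}\left[\frac{\Gamma(\alpha+1)}{\Gamma(\alpha/2+1)^2}-\frac{\theta h^{\alpha}}{(\mathrm{b}-\mathrm{a})^{\alpha}}\right]-\frac{c_2\Delta t}{h^{\alpha}}.$$
   Context: Let $\mathrm{a}<\mathrm{b}$, $h=(\mathrm{b}-\mathrm{a})/(M+1)$, $\Delta t>0$, $\mu=\Delta t/h^{\alpha}$. For $k\in\mathbb{Z}$ let $c_k=\frac{(-1)^k\Gamma(\alpha+1)}{\Gamma(\alpha/2-k+1)\Gamma(\alpha/2+k+1)}$. Let $T_1=\mu T_0\in\mathbb{R}^{M\times M}$ where $T_0$ is the symmetric Toeplitz matrix with entries $[T_0]_{i,j}=c_{i-j}$. The Hankel correction $\mathrm{HC}(T_1)=\mu H$ where $H\in\mathbb{R}^{M\times M}$ is the Hankel matrix with first row $[c_2,c_3,\dots,c_{M-1},0,0]$ and last row $[0,0,c_{M-1},\dots,c_3,c_2]$; i.e. $H_{i,j}=c_{i+j}$ if $i+j\le M-1$, $H_{i,j}=0$ if $i+j\in\{M,M+1,M+2\}$, and $H_{i,j}=c_{2M+2-i-j}$ if $i+j\ge M+3$. The constant $\theta$ is $$\theta=\frac{\left(1-\frac{1+\alpha}{5+\alpha/2}\right)^{5+\frac{\alpha}{2}}e^{1+\alpha}\Gamma(\alpha+1)\sin\left(\frac{\pi\alpha}{2}\right)}{\pi\alpha}.$$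 *)

theory Defs
  imports "HOL-Analysis.Gamma_Function" "Jordan_Normal_Form.Char_Poly"
begin

definition frac_coeff :: "real \<Rightarrow> int \<Rightarrow> real" where
  "frac_coeff \<alpha> k = (-1) powi k * Gamma (\<alpha> + 1) /
      (Gamma (\<alpha>/2 - of_int k + 1) * Gamma (\<alpha>/2 + of_int k + 1))"

definition T0_mat :: "nat \<Rightarrow> real \<Rightarrow> real mat" where
  "T0_mat M \<alpha> = mat M M (\<lambda>(i,j). frac_coeff \<alpha> (int i - int j))"

text \<open>Hankel matrix H; with 1-based indices s = (i+1)+(j+1).\<close>
definition H_mat :: "nat \<Rightarrow> real \<Rightarrow> real mat" where
  "H_mat M \<alpha> = mat M M (\<lambda>(i,j). let s = int i + int j + 2 in
      if s \<le> int M - 1 then frac_coeff \<alpha> s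
      else if s \<le> int M + 2 then 0
      else frac_coeff \<alpha> (2 * int M + 2 - s))"

definition grid_h :: "real \<Rightarrow> real \<Rightarrow> nat \<Rightarrow> real" where
  "grid_h a b M = (b - a) / (real M + 1)"

definition mu_par :: "real \<Rightarrow> real \<Rightarrow> nat \<Rightarrow> real \<Rightarrow> real \<Rightarrow> real" where
  "mu_par a b M dt \<alpha> = dt / (grid_h a b M powr \<alpha>)"

definition T1_mat :: "real \<Rightarrow> real \<Rightarrow> nat \<Rightarrow> real \<Rightarrow> real \<Rightarrow> real mat" where
  "T1_mat a b M dt \<alpha> = mu_par a b M dt \<alpha> \<cdot>\<^sub>m T0_mat M \<alpha>"

definition HC_mat :: "real \<Rightarrow> real \<Rightarrow> nat \<Rightarrow> real \<Rightarrow> real \<Rightarrow> real mat" where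
  "HC_mat a b M dt \<alpha> = mu_par a b M dt \<alpha> \<cdot>\<^sub>m H_mat M \<alpha>"

definition tau_mat :: "real \<Rightarrow> real \<Rightarrow> nat \<Rightarrow> real \<Rightarrow> real \<Rightarrow> real mat" where
  "tau_mat a b M dt \<alpha> = T1_mat a b M dt \<alpha> - HC_mat a b M dt \<alpha>"

definition theta_const :: "real \<Rightarrow> real" where
  "theta_const \<alpha> = (1 - (1 + \<alpha>) / (5 + \<alpha>/2)) powr (5 + \<alpha>/2) * exp (1 + \<alpha>)
      * Gamma (\<alpha> + 1) * sin (pi * \<alpha> / 2) / (pi * \<alpha>)"

end

theory Submission
  imports Defs "HOL-Analysis.Analysis"
begin

lemma sym_sum:
  fixes g :: "int \<Rightarrow> real"
  shows "(\<Sum>k=-int n..int n. g k) = g 0 + (\<Sum>k=1..int n. g k + g (-k))"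
proof (induction n)
  case 0 then show ?case by simp
next
  case (Suc n)
  have e1: "{-int (Suc n)..int (Suc n)} = insert (int n + 1) (insert (-(int n + 1)) {-int n..int n})" by auto
  have e2: "{1..int (Suc n)} = insert (int n + 1) {1..int n}" by auto
  show ?case unfolding e1 e2 using Suc by (simp add: algebra_simps)
qed

lemma step1:
  fixes c :: "int \<Rightarrow> real" and x :: real and I :: int
  assumes ev: "\<And>k. c (-k) = c k"
  shows "(\<Sum>k=-int n..int n. c k * sin ((I - k) * x)) = sin (I * x) * (c 0 + 2 * (\<Sum>k=1..int n. c k * cos (k * x)))"
proof -
  have "(\<Sum>k=-int n..int n. c k * sin ((I - k) * x)) = c 0 * sin (I * x) + (\<Sum>k=1..int n. c k * sin ((I - k) * x) + c (-k) * sin ((I - (-k)) * x))"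
    by (subst sym_sum) simp
  also have "(\<Sum>k=1..int n. c k * sin ((I - k) * x) + c (-k) * sin ((I - (-k)) * x)) = (\<Sum>k=1..int n. 2 * sin (I * x) * (c k * cos (k * x)))"
  proof (rule sum.cong[OF refl])
    fix k show "c k * sin ((I - k) * x) + c (-k) * sin ((I - (-k)) * x) = 2 * sin (I * x) * (c k * cos (k * x))"
      using ev[of k] by (simp add: algebra_simps sin_diff sin_add)
  qed
  finally show ?thesis by (simp add: sum_distrib_left algebra_simps)
qed

definition Hc :: "(int \<Rightarrow> real) \<Rightarrow> int \<Rightarrow> int \<Rightarrow> int \<Rightarrow> real" where
  "Hc c M I m = (let s = I + m in if s \<le> M - 1 then c s else if s \<le> M + 2 then 0 else c (2 * M + 2 - s))"

lemma split3:
  fixes g :: "int \<Rightarrow> real"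
  assumes "a \<le> 1" "M \<le> b" "0 \<le> M"
  shows "(\<Sum>L=a..b. g L) = (\<Sum>L=a..0. g L) + (\<Sum>L=1..M. g L) + (\<Sum>L=M+1..b. g L)"
proof -
  have e: "{a..b} = {a..0} \<union> ({1..M} \<union> {M+1..b})" using assms by auto
  have "(\<Sum>L=a..b. g L) = (\<Sum>L\<in>{a..0} \<union> ({1..M} \<union> {M+1..b}). g L)" by (simp only: e)
  also have "\<dots> = (\<Sum>L=a..0. g L) + (\<Sum>L\<in>{1..M} \<union> {M+1..b}. g L)"
    by (rule sum.union_disjoint) (use assms in auto)
  also have "(\<Sum>L\<in>{1..M} \<union> {M+1..b}. g L) = (\<Sum>L=1..M. g L) + (\<Sum>L=M+1..b. g L)"
    by (rule sum.union_disjoint) auto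
  finally show ?thesis by simp
qed

lemma key:
  fixes c :: "int \<Rightarrow> real" and M :: int and x :: real
  assumes ev: "\<And>k. c (-k) = c k"
    and M: "M \<ge> 1" and I: "1 \<le> I" "I \<le> M"
    and x: "x * (M + 1) = real j * pi"
  shows "(\<Sum>m=1..M. (c (I - m) - Hc c M I m) * sin (m * x))
     = sin (I * x) * (c 0 + 2 * (\<Sum>k=1..M-1. c k * cos (k * x)))"
proof -
  define n where "n = nat (M - 1)"
  have nM: "int n = M - 1" using M unfolding n_def by simp
  have per: "sin ((2 * M + 2 - m) * x) = - sin (m * x)" for m :: int
  proof -
    have "(2 * M + 2 - m) * x = 2 * pi * real j - m * x"
      using x by (simp add: algebra_simps)
    moreover have "sin (2 * pi * real j) = 0" using sin_npi2[of "2*j"] by (simp add: mult_ac)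
    moreover have "cos (2 * pi * real j) = 1" using cos_npi2[of "2*j"] by (simp add: mult_ac)
    ultimately show ?thesis by (simp add: sin_diff)
  qed
  have z: "sin ((M + 1) * x) = 0" using x by (simp add: mult.commute)
  have "sin (I * x) * (c 0 + 2 * (\<Sum>k=1..M-1. c k * cos (k * x))) = (\<Sum>k=-int n..int n. c k * sin ((I - k) * x))"
    using step1[where c=c and n=n and I=I and x=x, OF ev] nM by simp
  also have "\<dots> = (\<Sum>L=I-M+1..I+M-1. c (I - L) * sin (L * x))"
    by (rule sum.reindex_bij_witness[of _ "\<lambda>L. I - L" "\<lambda>L. I - L"]) (auto simp: nM)
  also have "\<dots> = (\<Sum>L=I-M+1..0. c (I - L) * sin (L * x)) + (\<Sum>L=1..M. c (I - L) * sin (L * x))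
       + (\<Sum>L=M+1..I+M-1. c (I - L) * sin (L * x))"
    by (rule split3) (use I in auto)
  also have "(\<Sum>L=I-M+1..0. c (I - L) * sin (L * x)) = - (\<Sum>m=0..M-1-I. c (I + m) * sin (m * x))"
    by (subst sum_negf[symmetric], rule sum.reindex_bij_witness[of _ "\<lambda>L. - L" "\<lambda>L. - L"]) auto
  also have "(\<Sum>m=0..M-1-I. c (I + m) * sin (m * x)) = (\<Sum>m=1..M. (if I + m \<le> M - 1 then c (I + m) else 0) * sin (m * x))"
  proof -
    have "(\<Sum>m=0..M-1-I. c (I + m) * sin (m * x)) = (\<Sum>m\<in>{m\<in>{0..M}. I + m \<le> M - 1}. c (I + m) * sin (m * x))"
      by (rule sum.cong) (use I in auto)
    also have "\<dots> = (\<Sum>m=0..M. (if I + m \<le> M - 1 then c (I + m) else 0) * sin (m * x))"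
      by (subst sum.inter_filter) (auto intro!: sum.cong)
    also have "{0..M} = insert 0 {1..M}" using M by auto
    finally show ?thesis by simp
  qed
  also have "(\<Sum>L=M+1..I+M-1. c (I - L) * sin (L * x)) = - (\<Sum>m=M+3-I..M+1. c (2 * M + 2 - I - m) * sin (m * x))"
  proof (subst sum_negf[symmetric], rule sum.reindex_bij_witness[of _ "\<lambda>L. 2 * M + 2 - L" "\<lambda>L. 2 * M + 2 - L"])
    fix L assume "L \<in> {M + 1..I + M - 1}"
    have "c (2 * M + 2 - I - (2 * M + 2 - L)) = c (I - L)" using ev[of "I - L"] by (simp add: algebra_simps)
    moreover have "sin (real_of_int (2 * M + 2 - L) * x) = - sin (real_of_int L * x)" using per[of L] by simp
    ultimately show "- (c (2 * M + 2 - I - (2 * M + 2 - L)) * sin (real_of_int (2 * M + 2 - L) * x)) = c (I - L) * sin (real_of_int L * x)"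
      by simp
  qed auto
  also have "(\<Sum>m=M+3-I..M+1. c (2 * M + 2 - I - m) * sin (m * x)) = (\<Sum>m=1..M. (if I + m \<ge> M + 3 then c (2 * M + 2 - I - m) else 0) * sin (m * x))"
  proof -
    have "(\<Sum>m=M+3-I..M+1. c (2 * M + 2 - I - m) * sin (m * x)) = (\<Sum>m\<in>{m\<in>{1..M+1}. I + m \<ge> M + 3}. c (2 * M + 2 - I - m) * sin (m * x))"
      by (rule sum.cong) (use I in auto)
    also have "\<dots> = (\<Sum>m=1..M+1. (if I + m \<ge> M + 3 then c (2 * M + 2 - I - m) else 0) * sin (m * x))"
      by (subst sum.inter_filter) (auto intro!: sum.cong)
    also have "{1..M+1} = insert (M+1) {1..M}" using M by auto
    finally show ?thesis using z by (simp add: add.commute)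
  qed
  finally have "sin (I * x) * (c 0 + 2 * (\<Sum>k=1..M-1. c k * cos (k * x))) =
     (\<Sum>m=1..M. c (I - m) * sin (m * x)) - (\<Sum>m=1..M. ((if I + m \<le> M - 1 then c (I + m) else 0) + (if I + m \<ge> M + 3 then c (2 * M + 2 - I - m) else 0)) * sin (m * x))"
    by (simp add: sum.distrib algebra_simps)
  also have "\<dots> = (\<Sum>m=1..M. (c (I - m) - Hc c M I m) * sin (m * x))"
    unfolding sum_subtractf[symmetric]
  proof (rule sum.cong[OF refl])
    fix m
    have "Hc c M I m = (if I + m \<le> M - 1 then c (I + m) else 0) + (if I + m \<ge> M + 3 then c (2 * M + 2 - I - m) else 0)"
      unfolding Hc_def Let_def by (auto simp: algebra_simps)
    then show "c (I - m) * sin (real_of_int m * x) - ((if I + m \<le> M - 1 then c (I + m) else 0) + (if I + m \<ge> M + 3 then c (2 * M + 2 - I - m) else 0)) * sin (real_of_int m * x) = (c (I - m) - Hc c M I m) * sin (real_of_int m * x)"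
      by (simp add: algebra_simps)
  qed
  finally show ?thesis by simp
qed

lemma cossum:
  fixes y :: real
  shows "2 * sin (y/2) * (\<Sum>j=1..n. cos (real j * y)) = sin ((real n + 1/2) * y) - sin (y/2)"
proof (induction n)
  case 0 then show ?case by simp
next
  case (Suc n)
  have a: "(real (Suc n) + 1/2) * y = (real n + 1) * y + y/2" by (simp add: algebra_simps)
  have b: "(real n + 1/2) * y = (real n + 1) * y - y/2" by (simp add: algebra_simps)
  have "2 * sin (y/2) * (\<Sum>j=1..Suc n. cos (real j * y)) = 2 * sin (y/2) * (\<Sum>j=1..n. cos (real j * y)) + 2 * sin (y/2) * cos ((real n + 1) * y)"
    by (simp add: algebra_simps)
  also have "\<dots> = sin ((real (Suc n) + 1/2) * y) - sin (y/2)"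
  proof -
    have g: "sin (A + B) - sin (A - B) = 2 * sin B * cos A" for A B :: real by (simp add: sin_add sin_diff)
    show ?thesis unfolding Suc a b g[symmetric] by simp
  qed
  finally show ?case .
qed

lemma cosval:
  fixes M m :: nat
  assumes "0 < m" "m < 2 * (M + 1)"
  shows "(\<Sum>j=1..M. cos (real j * (real m * pi / (real M + 1)))) = - (1 + (-1)^m) / 2"
proof -
  define y where "y = real m * pi / (real M + 1)"
  have s: "sin (y/2) > 0"
  proof (rule sin_gt_zero)
    show "0 < y/2" using assms by (simp add: y_def)
    have "real m < real (2 * (M + 1))" using assms(2) by (simp only: of_nat_less_iff)
    then have "real m < 2 * (real M + 1)" by simp
    then have "real m * pi < 2 * (real M + 1) * pi" by simp
    then show "y/2 < pi" unfolding y_def by (simp add: field_simps)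
  qed
  have "(real M + 1/2) * y = real m * pi - y/2" unfolding y_def by (simp add: field_simps)
  then have "sin ((real M + 1/2) * y) = - ((-1)^m * sin (y/2))"
    by (simp add: sin_diff)
  then have "2 * sin (y/2) * (\<Sum>j=1..M. cos (real j * y)) = 2 * sin (y/2) * (- (1 + (-1)^m) / 2)"
    using cossum[of y M] by (simp add: algebra_simps)
  then show ?thesis using s unfolding y_def by simp
qed

lemma orth:
  fixes M i l :: nat
  assumes "i < M" "l < M"
  shows "(\<Sum>j=1..M. sin (real (i+1) * (real j * pi / (real M + 1))) * sin (real (l+1) * (real j * pi / (real M + 1))))
     = (if i = l then (real M + 1) / 2 else 0)"
proof -
  define th where "th = pi / (real M + 1)"
  have pt: "sin (real (i+1) * (real j * th)) * sin (real (l+1) * (real j * th)) =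
     (cos (real j * (real (i+1) * th - real (l+1) * th)) - cos (real j * (real (i+l+2) * th))) / 2" for j
  proof -
    have g: "sin a * sin b = (cos (a - b) - cos (a + b)) / 2" for a b :: real by (simp add: cos_diff cos_add)
    have e1: "real (i+1) * (real j * th) - real (l+1) * (real j * th) = real j * (real (i+1) * th - real (l+1) * th)" by (simp add: algebra_simps)
    have e2: "real (i+1) * (real j * th) + real (l+1) * (real j * th) = real j * (real (i+l+2) * th)" by (simp add: algebra_simps)
    show ?thesis unfolding g e1 e2 ..
  qed
  have sp: "(\<Sum>j=1..M. cos (real j * (real (i+l+2) * th))) = - (1 + (-1)^(i+l+2)) / 2"
    unfolding th_def using cosval[of "i+l+2" M] assms by (simp add: mult.assoc)
  show ?thesis
  proof (cases "i = l")
    case True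
    then have "(\<Sum>j=1..M. sin (real (i+1) * (real j * th)) * sin (real (l+1) * (real j * th))) = (real M - (- (1 + (-1)^(i+l+2)) / 2)) / 2"
      unfolding pt using sp by (simp add: sum_divide_distrib[symmetric] sum_subtractf)
    then show ?thesis using True unfolding th_def by (simp add: field_simps)
  next
    case False
    define d where "d = (if i < l then l - i else i - l)"
    have d: "0 < d" "d < 2 * (M + 1)" using False assms unfolding d_def by auto
    have cd: "cos (real j * (real (i+1) * th - real (l+1) * th)) = cos (real j * (real d * th))" for j
    proof (cases "i < l")
      case True
      then have "real j * (real (i+1) * th - real (l+1) * th) = - (real j * (real d * th))"
        unfolding d_def by (simp add: of_nat_diff algebra_simps)
      then show ?thesis by simp
    next
      case False
      then have "real j * (real (i+1) * th - real (l+1) * th) = (real j * (real d * th))"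
        unfolding d_def by (simp add: of_nat_diff algebra_simps)
      then show ?thesis by metis
    qed
    have par: "(-1::real)^d = (-1)^(i+l+2)"
    proof -
      have "even (d + (i+l+2)) " unfolding d_def by auto
      then show ?thesis by (metis (no_types) neg_one_even_power neg_one_odd_power even_add)
    qed
    have sd: "(\<Sum>j=1..M. cos (real j * (real d * th))) = - (1 + (-1)^d) / 2"
      unfolding th_def using cosval[OF d] by (simp add: mult.assoc)
    have "(\<Sum>j=1..M. sin (real (i+1) * (real j * th)) * sin (real (l+1) * (real j * th))) = 0"
      unfolding pt cd using sp sd par by (simp add: sum_divide_distrib[symmetric] sum_subtractf)
    then show ?thesis using False unfolding th_def by simp
  qed
qed

definition fM :: "(int \<Rightarrow> real) \<Rightarrow> nat \<Rightarrow> real \<Rightarrow> real" where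
  "fM c M x = c 0 + 2 * (\<Sum>k=1..int M - 1. c k * cos (real_of_int k * x))"

definition sv :: "nat \<Rightarrow> nat \<Rightarrow> nat \<Rightarrow> real" where
  "sv M j i = sin (real (i+1) * (real j * pi / (real M + 1)))"

lemma key_nat:
  fixes c :: "int \<Rightarrow> real"
  assumes ev: "\<And>k. c (-k) = c k" and M: "M \<ge> 1" and i: "i < M" and j: "j \<in> {1..M}"
  shows "(\<Sum>l<M. (c (int i - int l) - Hc c (int M) (int i + 1) (int l + 1)) * sv M j l) = fM c M (real j * pi / (real M + 1)) * sv M j i"
proof -
  define x where "x = real j * pi / (real M + 1)"
  have x: "x * real_of_int (int M + 1) = real j * pi" unfolding x_def by (simp add: field_simps)
  have "(\<Sum>l<M. (c (int i - int l) - Hc c (int M) (int i + 1) (int l + 1)) * sv M j l)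
     = (\<Sum>m=1..int M. (c ((int i + 1) - m) - Hc c (int M) (int i + 1) m) * sin (real_of_int m * x))"
    unfolding sv_def x_def
    by (rule sum.reindex_bij_witness[of _ "\<lambda>m. nat (m - 1)" "\<lambda>l. int l + 1"]) (auto simp: algebra_simps)
  also have "\<dots> = sin (real_of_int (int i + 1) * x) * (c 0 + 2 * (\<Sum>k=1..int M-1. c k * cos (real_of_int k * x)))"
    by (rule key[where c=c, OF ev _ _ _ x]) (use M i in auto)
  finally show ?thesis unfolding fM_def sv_def x_def by (simp add: mult.commute add.commute)
qed

lemma eig_char:
  fixes c :: "int \<Rightarrow> real" and A :: "real mat"
  assumes ev: "\<And>k. c (-k) = c k" and M: "M \<ge> 1"
    and A: "A \<in> carrier_mat M M"
    and Ae: "\<And>i l. i < M \<Longrightarrow> l < M \<Longrightarrow> A $$ (i, l) = mu * (c (int i - int l) - Hc c (int M) (int i + 1) (int l + 1))"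
    and eg: "eigenvalue A lam"
  shows "\<exists>j\<in>{1..M}. lam = mu * fM c M (real j * pi / (real M + 1))"
proof (rule ccontr)
  assume nj: "\<not> ?thesis"
  from eg obtain v where v: "v \<in> carrier_vec M" "v \<noteq> 0\<^sub>v M" "A *\<^sub>v v = lam \<cdot>\<^sub>v v"
    unfolding eigenvalue_def eigenvector_def using A by auto
  have row: "(\<Sum>l<M. A $$ (i, l) * v $ l) = lam * v $ i" if "i < M" for i
  proof -
    have "(A *\<^sub>v v) $ i = lam * v $ i" using v that by simp
    moreover have "(A *\<^sub>v v) $ i = (\<Sum>l<M. A $$ (i, l) * v $ l)"
      using A v(1) that by (auto simp: scalar_prod_def lessThan_atLeast0 intro!: sum.cong)
    ultimately show ?thesis by simp
  qed
  have sym: "A $$ (i, l) = A $$ (l, i)" if "i < M" "l < M" for i l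
  proof -
    have "c (int i - int l) = c (int l - int i)" using ev[of "int l - int i"] by simp
    moreover have "Hc c (int M) (int i + 1) (int l + 1) = Hc c (int M) (int l + 1) (int i + 1)"
      unfolding Hc_def by (simp add: add_ac)
    ultimately show ?thesis using Ae that by simp
  qed
  define P where "P j = (\<Sum>i<M. sv M j i * v $ i)" for j
  have P0: "P j = 0" if j: "j \<in> {1..M}" for j
  proof -
    have "lam * P j = (\<Sum>i<M. sv M j i * (lam * v $ i))" unfolding P_def by (simp add: sum_distrib_left algebra_simps)
    also have "\<dots> = (\<Sum>i<M. sv M j i * (\<Sum>l<M. A $$ (i, l) * v $ l))"
      by (rule sum.cong) (simp_all add: row)
    also have "\<dots> = (\<Sum>l<M. v $ l * (\<Sum>i<M. A $$ (l, i) * sv M j i))"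
      unfolding sum_distrib_left by (subst sum.swap) (auto simp: sym intro!: sum.cong)
    also have "\<dots> = (\<Sum>l<M. v $ l * (mu * fM c M (real j * pi / (real M + 1)) * sv M j l))"
    proof (rule sum.cong[OF refl])
      fix l assume l: "l \<in> {..<M}"
      have "(\<Sum>i<M. A $$ (l, i) * sv M j i) = mu * (\<Sum>i<M. (c (int l - int i) - Hc c (int M) (int l + 1) (int i + 1)) * sv M j i)"
        unfolding sum_distrib_left using l by (auto simp: Ae intro!: sum.cong)
      also have "\<dots> = mu * fM c M (real j * pi / (real M + 1)) * sv M j l"
        using key_nat[where c=c and M=M and i=l and j=j, OF ev M _ j] l by simp
      finally show "v $ l * (\<Sum>i<M. A $$ (l, i) * sv M j i) = v $ l * (mu * fM c M (real j * pi / (real M + 1)) * sv M j l)" by simp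
    qed
    also have "\<dots> = mu * fM c M (real j * pi / (real M + 1)) * P j"
      unfolding P_def sum_distrib_left by (auto intro!: sum.cong)
    finally have "(lam - mu * fM c M (real j * pi / (real M + 1))) * P j = 0" by (simp add: algebra_simps)
    moreover have "lam \<noteq> mu * fM c M (real j * pi / (real M + 1))" using nj j by auto
    ultimately show ?thesis by simp
  qed
  have "v = 0\<^sub>v M"
  proof (rule eq_vecI)
    show "dim_vec v = dim_vec (0\<^sub>v M)" using v by simp
    fix i assume "i < dim_vec (0\<^sub>v M)"
    then have i: "i < M" by simp
    have "0 = (\<Sum>j=1..M. sv M j i * P j)" using P0 by simp
    also have "\<dots> = (\<Sum>l<M. v $ l * (\<Sum>j=1..M. sv M j i * sv M j l))"
      unfolding P_def sum_distrib_left by (subst sum.swap) (auto intro!: sum.cong)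
    also have "\<dots> = (\<Sum>l<M. v $ l * (if i = l then (real M + 1) / 2 else 0))"
      using orth[OF i] unfolding sv_def by (auto intro!: sum.cong)
    also have "\<dots> = v $ i * ((real M + 1) / 2)"
    proof -
      have "(\<Sum>l<M. v $ l * (if i = l then (real M + 1) / 2 else 0)) = (\<Sum>l<M. if l = i then v $ l * ((real M + 1) / 2) else 0)"
        by (rule sum.cong) auto
      then show ?thesis using i by (simp add: sum.delta)
    qed
    finally show "v $ i = 0\<^sub>v M $ i" using i by simp
  qed
  with v show False by simp
qed

lemma Gamma_reflection_real:
  fixes z :: real
  shows "Gamma z * Gamma (1 - z) = pi / sin (pi * z)"
proof -
  have "complex_of_real (Gamma z * Gamma (1 - z)) = Gamma (complex_of_real z) * Gamma (1 - complex_of_real z)"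
    by (simp add: Gamma_complex_of_real[symmetric])
  also have "\<dots> = of_real pi / sin (of_real pi * of_real z)" by (rule Gamma_reflection_complex)
  also have "\<dots> = complex_of_real (pi / sin (pi * z))"
    by (simp add: sin_of_real[symmetric])
  finally show ?thesis by (simp only: of_real_eq_iff)
qed

lemma Gp1: "(x::real) > 0 \<Longrightarrow> Gamma (x + 1) = x * Gamma x"
  by (rule Gamma_plus1) auto

lemma Gamma_shift_bound:
  fixes y s :: real
  assumes "y > 0" "0 \<le> s" "s \<le> 1"
  shows "Gamma (y + s) \<le> y powr s * Gamma y"
proof -
  have "(ln \<circ> Gamma) ((1 - s) *\<^sub>R y + s *\<^sub>R (y + 1)) \<le> (1 - s) * (ln \<circ> Gamma) y + s * (ln \<circ> Gamma) (y + 1)"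
    by (rule convex_onD[OF log_convex_Gamma_real]) (use assms in auto)
  moreover have "(1 - s) *\<^sub>R y + s *\<^sub>R (y + 1) = y + s" by (simp add: algebra_simps)
  moreover have "ln (Gamma (y + 1)) = ln y + ln (Gamma y)"
  proof -
    have g: "Gamma y > 0" using assms by simp
    have "ln (y * Gamma y) = ln y + ln (Gamma y)" by (rule ln_mult_pos) (use g assms(1) in auto)
    then show ?thesis using Gp1[OF assms(1)] by simp
  qed
  ultimately have "ln (Gamma (y + s)) \<le> ln (Gamma y) + s * ln y" by (simp add: algebra_simps)
  then have "exp (ln (Gamma (y + s))) \<le> exp (ln (Gamma y) + s * ln y)" by simp
  moreover have "Gamma (y + s) > 0" using assms by simp
  ultimately show ?thesis using assms by (simp add: exp_add powr_def mult.commute)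
qed

lemma solve_mul: "(b::real) \<noteq> 0 \<Longrightarrow> a * b = c / d \<Longrightarrow> a = c / (d * b)"
  by (metis divide_divide_eq_left nonzero_eq_divide_eq)

lemma solve_mul': "(b::real) \<noteq> 0 \<Longrightarrow> b * a = c / d \<Longrightarrow> a = c / (d * b)"
  by (metis divide_divide_eq_left nonzero_eq_divide_eq mult.commute)

lemma t1: "(a::real) > 0 \<Longrightarrow> X > 0 \<Longrightarrow> a * g / ((a * X / 2) * (a * X / 2)) = 2 * g / (X * (a * X / 2))"
  by (simp add: field_simps)
lemma t2: "(X::real) > 0 \<Longrightarrow> s \<noteq> 0 \<Longrightarrow> X * G = pi / s \<Longrightarrow> s * G = pi / X"
  by (simp add: field_simps)
lemma t3: "(X::real) > 0 \<Longrightarrow> 2 * g / (X * G2) = 2 * (g / p) * (p / X) / G2" if "p > 0"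
  using that by (simp add: field_simps)
lemma t4: "2 * ((g::real) / p) * (s * G) / G2 = 2 * (g * s / p) * (G / G2)"
  by (simp add: divide_inverse mult_ac)

lemma sin_shift: "sin (a - real n * pi) = (-1)^n * sin a"
  by (simp add: sin_diff)

lemma ck_formula:
  fixes \<alpha> :: real and k :: nat
  assumes a: "0 < \<alpha>" "\<alpha> < 2" and k: "k \<ge> 1"
  shows "frac_coeff \<alpha> (int k) = - (Gamma (\<alpha> + 1) * sin (pi * \<alpha> / 2) / pi) * (Gamma (real k - \<alpha>/2) / Gamma (real k + 1 + \<alpha>/2))"
proof -
  define z where "z = \<alpha>/2 - real k + 1"
  have s0: "sin (pi * \<alpha> / 2) > 0" using a by (intro sin_gt_zero) auto
  have sz: "sin (pi * z) = (-1)^(k-1) * sin (pi * \<alpha> / 2)"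
  proof -
    have "pi * z = pi * \<alpha> / 2 - real (k - 1) * pi" using k unfolding z_def by (simp add: of_nat_diff algebra_simps)
    then show ?thesis by (simp add: sin_shift)
  qed
  have gk: "Gamma (real k - \<alpha>/2) > 0" using a k by (intro Gamma_real_pos) linarith
  have "Gamma z * Gamma (1 - z) = pi / sin (pi * z)" by (rule Gamma_reflection_real)
  moreover have "1 - z = real k - \<alpha>/2" unfolding z_def by simp
  ultimately have "Gamma z = pi / (sin (pi * z) * Gamma (real k - \<alpha>/2))" using gk by (intro solve_mul) auto
  moreover have "sin (pi * z) \<noteq> 0" using sz s0 by simp
  ultimately have iz: "1 / Gamma z = sin (pi * z) * Gamma (real k - \<alpha>/2) / pi" by simp
  have "frac_coeff \<alpha> (int k) = (-1)^k * Gamma (\<alpha> + 1) * (1 / Gamma z) / Gamma (real k + 1 + \<alpha>/2)"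
    unfolding frac_coeff_def z_def by (simp add: add_ac)
  also have "\<dots> = (-1)^k * (-1)^(k-1) * (Gamma (\<alpha> + 1) * sin (pi * \<alpha> / 2) / pi) * (Gamma (real k - \<alpha>/2) / Gamma (real k + 1 + \<alpha>/2))"
    unfolding iz sz by simp
  also have "(-1::real)^k * (-1)^(k-1) = -1"
  proof -
    have "(-1::real)^k * (-1)^(k-1) = (-1)^(k + (k-1))" by (simp add: power_add)
    also have "k + (k - 1) = Suc (2 * (k-1))" using k by simp
    finally show ?thesis by simp
  qed
  finally show ?thesis by simp
qed

lemma c0_formula:
  fixes \<alpha> :: real
  assumes a: "0 < \<alpha>" "\<alpha> < 2"
  shows "frac_coeff \<alpha> 0 = 2 * (Gamma \<alpha> * sin (pi * \<alpha> / 2) / pi) * (Gamma (1 - \<alpha>/2) / Gamma (1 + \<alpha>/2))"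
proof -
  have s0: "sin (pi * \<alpha> / 2) > 0" using a by (intro sin_gt_zero) auto
  have r: "Gamma (\<alpha>/2) * Gamma (1 - \<alpha>/2) = pi / sin (pi * (\<alpha>/2))" by (rule Gamma_reflection_real)
  have g1: "Gamma (\<alpha>/2 + 1) = \<alpha>/2 * Gamma (\<alpha>/2)" using a by (intro Gp1) simp
  have g2: "Gamma (\<alpha> + 1) = \<alpha> * Gamma \<alpha>" using a by (intro Gp1) simp
  have p1: "Gamma (\<alpha>/2) > 0" "Gamma (1 - \<alpha>/2) > 0" "Gamma \<alpha> > 0" using a by simp_all
  define X where "X = Gamma (\<alpha>/2)"
  have X: "X > 0" unfolding X_def using p1 by simp
  have r': "X * Gamma (1 - \<alpha>/2) = pi / sin (pi * \<alpha> / 2)" using r unfolding X_def by simp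
  have sg: "sin (pi * \<alpha> / 2) * Gamma (1 - \<alpha>/2) = pi / X"
    using t2[OF X _ r'] s0 by simp
  have G2: "Gamma (1 + \<alpha>/2) = \<alpha> * X / 2" using g1 unfolding X_def by (simp add: add.commute)
  have "frac_coeff \<alpha> 0 = \<alpha> * Gamma \<alpha> / (Gamma (1 + \<alpha>/2) * Gamma (1 + \<alpha>/2))"
    unfolding frac_coeff_def using g2 by (simp add: add.commute)
  also have "\<dots> = 2 * Gamma \<alpha> / (X * Gamma (1 + \<alpha>/2))" unfolding G2 using a X by (intro t1)
  also have "\<dots> = 2 * (Gamma \<alpha> / pi) * (sin (pi * \<alpha> / 2) * Gamma (1 - \<alpha>/2)) / Gamma (1 + \<alpha>/2)"
    unfolding sg using X pi_gt_zero by (intro t3)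
  finally show ?thesis by (simp only: t4)
qed

definition Ac :: "real \<Rightarrow> real" where "Ac \<alpha> = Gamma \<alpha> * sin (pi * \<alpha> / 2) / pi"
definition rr :: "real \<Rightarrow> nat \<Rightarrow> real" where "rr \<alpha> n = Gamma (real n + 1 - \<alpha>/2) / Gamma (real n + 1 + \<alpha>/2)"

lemma q_tele:
  fixes \<alpha> :: real and k :: nat
  assumes a: "0 < \<alpha>" "\<alpha> < 2" and k: "k \<ge> 1"
  shows "\<alpha> * (Gamma (real k - \<alpha>/2) / Gamma (real k + 1 + \<alpha>/2)) = rr \<alpha> (k - 1) - rr \<alpha> k"
proof -
  have pos: "real k - \<alpha>/2 > 0" "real k + \<alpha>/2 > 0" using a k by linarith+
  have e1: "Gamma (real k + 1 - \<alpha>/2) = (real k - \<alpha>/2) * Gamma (real k - \<alpha>/2)"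
    using Gp1[OF pos(1)] by (simp add: algebra_simps)
  have e2: "Gamma (real k + 1 + \<alpha>/2) = (real k + \<alpha>/2) * Gamma (real k + \<alpha>/2)"
    using Gp1[OF pos(2)] by (simp add: algebra_simps)
  have e3: "rr \<alpha> (k - 1) = Gamma (real k - \<alpha>/2) / Gamma (real k + \<alpha>/2)"
    unfolding rr_def using k by (simp add: of_nat_diff algebra_simps)
  have g: "Gamma (real k - \<alpha>/2) > 0" "Gamma (real k + \<alpha>/2) > 0" using pos by simp_all
  have gen: "(q - p) * (G1 / (q * G2)) = G1 / G2 - p * G1 / (q * G2)" if "q > 0" "G2 > 0" for p q G1 G2 :: real
    using that by (simp add: field_simps)
  have "\<alpha> = (real k + \<alpha>/2) - (real k - \<alpha>/2)" by simp
  then have "\<alpha> * (Gamma (real k - \<alpha>/2) / Gamma (real k + 1 + \<alpha>/2)) =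
     ((real k + \<alpha>/2) - (real k - \<alpha>/2)) * (Gamma (real k - \<alpha>/2) / ((real k + \<alpha>/2) * Gamma (real k + \<alpha>/2)))"
    unfolding e2 by simp
  also have "\<dots> = Gamma (real k - \<alpha>/2) / Gamma (real k + \<alpha>/2) - (real k - \<alpha>/2) * Gamma (real k - \<alpha>/2) / ((real k + \<alpha>/2) * Gamma (real k + \<alpha>/2))"
    by (rule gen) (use pos g in auto)
  finally show ?thesis unfolding e3 unfolding rr_def e1 e2 .
qed

lemma psum:
  fixes \<alpha> :: real
  assumes a: "0 < \<alpha>" "\<alpha> < 2"
  shows "frac_coeff \<alpha> 0 + 2 * (\<Sum>k=1..n. frac_coeff \<alpha> (int k)) = 2 * Ac \<alpha> * rr \<alpha> n"
proof (induction n)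
  case 0
  show ?case using c0_formula[OF a] unfolding Ac_def rr_def by (simp add: add.commute)
next
  case (Suc n)
  have g: "Gamma (\<alpha> + 1) = \<alpha> * Gamma \<alpha>" using a by (intro Gp1) simp
  have "frac_coeff \<alpha> (int (Suc n)) = - Ac \<alpha> * (\<alpha> * (Gamma (real (Suc n) - \<alpha>/2) / Gamma (real (Suc n) + 1 + \<alpha>/2)))"
    using ck_formula[OF a, of "Suc n"] unfolding Ac_def g by simp
  also have "\<dots> = - Ac \<alpha> * (rr \<alpha> n - rr \<alpha> (Suc n))" using q_tele[OF a, of "Suc n"] by simp
  finally have "frac_coeff \<alpha> (int (Suc n)) = - Ac \<alpha> * (rr \<alpha> n - rr \<alpha> (Suc n))" .
  then show ?case using Suc by (simp add: algebra_simps)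
qed

lemma ck_nonpos:
  fixes \<alpha> :: real and k :: nat
  assumes a: "0 < \<alpha>" "\<alpha> < 2" and k: "k \<ge> 1"
  shows "frac_coeff \<alpha> (int k) \<le> 0"
proof -
  have s0: "sin (pi * \<alpha> / 2) > 0" using a by (intro sin_gt_zero) auto
  have "Gamma (real k - \<alpha>/2) > 0" "Gamma (real k + 1 + \<alpha>/2) > 0" "Gamma (\<alpha> + 1) > 0" using a k by (intro Gamma_real_pos; linarith)+
  then show ?thesis unfolding ck_formula[OF a k] using s0 by simp
qed

lemma fM_bounds:
  fixes \<alpha> :: real
  assumes a: "0 < \<alpha>" "\<alpha> < 2" and M: "M \<ge> 2"
  shows "2 * Ac \<alpha> * rr \<alpha> (M - 1) \<le> fM (frac_coeff \<alpha>) M x"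
    and "fM (frac_coeff \<alpha>) M x \<le> 2 * frac_coeff \<alpha> 0 - 2 * Ac \<alpha> * rr \<alpha> (M - 1)"
proof -
  let ?c = "frac_coeff \<alpha>"
  have re: "(\<Sum>k=1..int M - 1. g k) = (\<Sum>k=1..M-1. g (int k))" for g :: "int \<Rightarrow> real"
    by (rule sum.reindex_bij_witness[where i=int and j=nat]) (use M in auto)
  have f: "fM ?c M x = ?c 0 + 2 * (\<Sum>k=1..M-1. ?c (int k) * cos (real k * x))"
    unfolding fM_def re by simp
  have ps: "?c 0 + 2 * (\<Sum>k=1..M-1. ?c (int k)) = 2 * Ac \<alpha> * rr \<alpha> (M - 1)" by (rule psum[OF a])
  have "(\<Sum>k=1..M-1. ?c (int k)) \<le> (\<Sum>k=1..M-1. ?c (int k) * cos (real k * x))"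
  proof (rule sum_mono)
    fix k assume "k \<in> {1..M-1}"
    then have "?c (int k) \<le> 0" using ck_nonpos[OF a] by auto
    then show "?c (int k) \<le> ?c (int k) * cos (real k * x)"
      using cos_le_one[of "real k * x"] by (simp add: mult_le_cancel_left1)
  qed
  then show "2 * Ac \<alpha> * rr \<alpha> (M - 1) \<le> fM ?c M x" unfolding f ps[symmetric] by simp
  have "(\<Sum>k=1..M-1. ?c (int k) * cos (real k * x)) \<le> (\<Sum>k=1..M-1. - ?c (int k))"
  proof (rule sum_mono)
    fix k assume "k \<in> {1..M-1}"
    then have "?c (int k) \<le> 0" using ck_nonpos[OF a] by auto
    then show "?c (int k) * cos (real k * x) \<le> - ?c (int k)"
      using cos_ge_minus_one[of "real k * x"]
      by (metis minus_mult_right mult.right_neutral mult_left_mono_neg)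
  qed
  then show "fM ?c M x \<le> 2 * ?c 0 - 2 * Ac \<alpha> * rr \<alpha> (M - 1)" unfolding f ps[symmetric]
    by (simp add: sum_negf)
qed

lemma rr_lower:
  fixes \<alpha> :: real
  assumes a: "1 < \<alpha>" "\<alpha> < 2"
  shows "rr \<alpha> n > 1 / (real n + 2) powr \<alpha>"
proof -
  define y where "y = real n + 1 - \<alpha>/2"
  define s where "s = \<alpha> - 1"
  have y: "y > 0" unfolding y_def using a by simp
  have ys: "y + s > 0" unfolding y_def s_def using a by simp
  have gb: "Gamma (y + s) \<le> y powr s * Gamma y" by (rule Gamma_shift_bound) (use y a in \<open>auto simp: s_def\<close>)
  have gy: "Gamma y > 0" using y by simp
  have "Gamma (real n + 1 + \<alpha>/2) = (y + s) * Gamma (y + s)"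
    using Gp1[OF ys] unfolding y_def s_def by (simp add: algebra_simps)
  also have "\<dots> \<le> (y + s) * (y powr s * Gamma y)" using gb ys by simp
  also have "\<dots> < (real n + 2) * ((real n + 2) powr s * Gamma y)"
  proof (rule mult_less_le_imp_less)
    show "y + s < real n + 2" unfolding y_def s_def using a by simp
    have "y powr s \<le> (real n + 2) powr s" by (rule powr_mono2) (use y a in \<open>auto simp: s_def y_def\<close>)
    then show "y powr s * Gamma y \<le> (real n + 2) powr s * Gamma y" using gy by simp
  qed (use ys gy y in auto)
  also have "(real n + 2) * ((real n + 2) powr s * Gamma y) = (real n + 2) powr \<alpha> * Gamma y"
  proof -
    have "(real n + 2) * (real n + 2) powr s = (real n + 2) powr (1 + s)" by (simp add: powr_add)
    then show ?thesis unfolding s_def by simp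
  qed
  finally have lt: "Gamma (real n + 1 + \<alpha>/2) < (real n + 2) powr \<alpha> * Gamma y" .
  have gp: "Gamma (real n + 1 + \<alpha>/2) > 0" using a by (intro Gamma_real_pos) linarith
  have pp: "(real n + 2) powr \<alpha> > 0" by simp
  show ?thesis unfolding rr_def y_def[symmetric] using lt gp pp gy
    by (simp add: field_simps)
qed

lemma K_le1:
  fixes \<alpha> :: real
  assumes a: "1 < \<alpha>" "\<alpha> \<le> 2"
  shows "(1 - (1 + \<alpha>) / (5 + \<alpha>/2)) powr (5 + \<alpha>/2) * exp (1 + \<alpha>) \<le> 1"
proof -
  define u where "u = 1 - (1 + \<alpha>) / (5 + \<alpha>/2)"
  have u: "u > 0" unfolding u_def using a by (simp add: field_simps)
  have "ln u \<le> u - 1" using u by (rule ln_le_minus_one)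
  then have "(5 + \<alpha>/2) * ln u \<le> (5 + \<alpha>/2) * (u - 1)" using a by (intro mult_left_mono) auto
  also have "(5 + \<alpha>/2) * (u - 1) = - (1 + \<alpha>)" unfolding u_def using a by (simp add: field_simps)
  finally have "u powr (5 + \<alpha>/2) \<le> exp (- (1 + \<alpha>))" using u by (simp add: powr_def mult.commute)
  then have "u powr (5 + \<alpha>/2) * exp (1 + \<alpha>) \<le> exp (- (1 + \<alpha>)) * exp (1 + \<alpha>)" by (intro mult_right_mono) auto
  also have "\<dots> = 1" by (simp add: exp_add[symmetric])
  finally show ?thesis unfolding u_def .
qed

lemma theta_le:
  fixes \<alpha> :: real
  assumes a: "1 < \<alpha>" "\<alpha> \<le> 2"
  shows "theta_const \<alpha> \<le> Ac \<alpha>" and "0 \<le> Ac \<alpha>"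
proof -
  have s0: "sin (pi * \<alpha> / 2) \<ge> 0" using a by (intro sin_ge_zero) auto
  have g: "Gamma (\<alpha> + 1) = \<alpha> * Gamma \<alpha>" using a by (intro Gp1) simp
  have gp: "Gamma \<alpha> > 0" using a by simp
  show A0: "0 \<le> Ac \<alpha>" unfolding Ac_def using s0 gp by simp
  have "theta_const \<alpha> = ((1 - (1 + \<alpha>) / (5 + \<alpha>/2)) powr (5 + \<alpha>/2) * exp (1 + \<alpha>)) * Ac \<alpha>"
    unfolding theta_const_def Ac_def g using a by (simp add: field_simps)
  also have "\<dots> \<le> 1 * Ac \<alpha>" by (rule mult_right_mono[OF K_le1[OF a] A0])
  finally show "theta_const \<alpha> \<le> Ac \<alpha>" by simp
qed

lemma fc_even: "frac_coeff \<alpha> (-k) = frac_coeff \<alpha> k"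
  unfolding frac_coeff_def by (simp add: power_int_minus_one_minus algebra_simps)

lemma fc2_big:
  assumes "k \<ge> 2"
  shows "frac_coeff 2 k = 0"
proof -
  have "(2::real)/2 - of_int k + 1 = of_int (2 - k)" by simp
  moreover have "Gamma (of_int (2 - k) :: real) = 0"
    by (rule Gamma_nonpos_Int, rule nonpos_Ints_of_int) (use assms in simp)
  ultimately show ?thesis unfolding frac_coeff_def by simp
qed

lemma fc2_1: "frac_coeff 2 1 = -1"
proof -
  have "Gamma (3::real) = 2" using Gamma_fact[of 2, where 'a=real] by (simp add: numeral_eq_Suc)
  moreover have "Gamma (2::real) = 1" using Gamma_fact[of 1, where 'a=real] by simp
  ultimately show ?thesis unfolding frac_coeff_def by simp
qed

lemma fc2_0: "frac_coeff 2 0 = 2"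
proof -
  have "Gamma (3::real) = 2" using Gamma_fact[of 2, where 'a=real] by (simp add: numeral_eq_Suc)
  moreover have "Gamma (2::real) = 1" using Gamma_fact[of 1, where 'a=real] by simp
  ultimately show ?thesis unfolding frac_coeff_def by simp
qed

lemma fM2:
  assumes "M \<ge> 2"
  shows "fM (frac_coeff 2) M x = 2 - 2 * cos x"
proof -
  have "{1..int M - 1} = insert 1 {2..int M - 1}" using assms by auto
  then have "(\<Sum>k=1..int M - 1. frac_coeff 2 k * cos (real_of_int k * x)) = frac_coeff 2 1 * cos x + (\<Sum>k=2..int M - 1. frac_coeff 2 k * cos (real_of_int k * x))"
    by simp
  also have "(\<Sum>k=2..int M - 1. frac_coeff 2 k * cos (real_of_int k * x)) = 0"
    by (rule sum.neutral) (auto simp: fc2_big)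
  finally show ?thesis unfolding fM_def fc2_0 fc2_1 by simp
qed

lemma F_bounds:
  fixes \<alpha> x :: real and M :: nat
  assumes a: "1 < \<alpha>" "\<alpha> \<le> 2" and M: "M \<ge> 2" and x: "0 < x" "x < pi"
  shows "2 * theta_const \<alpha> / (real M + 1) powr \<alpha> < fM (frac_coeff \<alpha>) M x"
    and "fM (frac_coeff \<alpha>) M x < 2 * frac_coeff \<alpha> 0 - 2 * theta_const \<alpha> / (real M + 1) powr \<alpha> - frac_coeff \<alpha> 2"
proof -
  have "(2 * theta_const \<alpha> / (real M + 1) powr \<alpha> < fM (frac_coeff \<alpha>) M x) \<and>
     (fM (frac_coeff \<alpha>) M x < 2 * frac_coeff \<alpha> 0 - 2 * theta_const \<alpha> / (real M + 1) powr \<alpha> - frac_coeff \<alpha> 2)"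
  proof (cases "\<alpha> = 2")
    case True
    have th: "theta_const 2 = 0" unfolding theta_const_def by simp
    have c1: "cos x < 1" using x cos_monotone_0_pi[of 0 x] by simp
    have c2: "cos x > -1" using x cos_monotone_0_pi[of x pi] by simp
    show ?thesis unfolding True th using fM2[OF M, of x] c1 c2 fc2_0 fc2_big[of 2] by simp
  next
    case False
    then have a': "0 < \<alpha>" "\<alpha> < 2" "1 < \<alpha>" using a by auto
    define n where "n = M - 1"
    have n2: "real n + 2 = real M + 1" using M unfolding n_def by (simp add: of_nat_diff)
    have s0: "sin (pi * \<alpha> / 2) > 0" using a' by (intro sin_gt_zero) auto
    have A: "Ac \<alpha> > 0" unfolding Ac_def using s0 a' by simp
    have rl: "rr \<alpha> n > 1 / (real M + 1) powr \<alpha>" using rr_lower[OF a'(3) a'(2), of n] n2 by simp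
    have tl: "theta_const \<alpha> \<le> Ac \<alpha>" using theta_le[OF a] by simp
    have pp: "(real M + 1) powr \<alpha> > 0" by simp
    have lo: "2 * theta_const \<alpha> / (real M + 1) powr \<alpha> < 2 * Ac \<alpha> * rr \<alpha> n"
    proof -
      have "2 * theta_const \<alpha> / (real M + 1) powr \<alpha> \<le> 2 * Ac \<alpha> * (1 / (real M + 1) powr \<alpha>)"
        using tl pp by (simp add: divide_right_mono)
      also have "\<dots> < 2 * Ac \<alpha> * rr \<alpha> n" using rl A by (intro mult_strict_left_mono) auto
      finally show ?thesis .
    qed
    have c2: "frac_coeff \<alpha> 2 \<le> 0" using ck_nonpos[OF a'(1,2), of 2] by simp
    show ?thesis using fM_bounds[OF a'(1,2) M, of x] lo c2 unfolding n_def by auto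
  qed
  then show "2 * theta_const \<alpha> / (real M + 1) powr \<alpha> < fM (frac_coeff \<alpha>) M x"
    and "fM (frac_coeff \<alpha>) M x < 2 * frac_coeff \<alpha> 0 - 2 * theta_const \<alpha> / (real M + 1) powr \<alpha> - frac_coeff \<alpha> 2"
    by auto
qed

theorem lemma4:
  fixes a b dt \<alpha> lam :: real and M :: nat
  assumes "a < b" and "even M" and "M \<ge> 4"
    and "1 < \<alpha>" and "\<alpha> \<le> 2" and "dt > 0"
    and "eigenvalue (tau_mat a b M dt \<alpha>) lam"
  shows "2 * dt * theta_const \<alpha> / (b - a) powr \<alpha> < lam
    \<and> lam < 2 * dt / grid_h a b M powr \<alpha> *
          (Gamma (\<alpha> + 1) / Gamma (\<alpha>/2 + 1)^2
           - theta_const \<alpha> * grid_h a b M powr \<alpha> / (b - a) powr \<alpha>)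
        - frac_coeff \<alpha> 2 * dt / grid_h a b M powr \<alpha>"
proof -
  define h where "h = grid_h a b M"
  define mu where "mu = mu_par a b M dt \<alpha>"
  define c where "c = frac_coeff \<alpha>"
  have h: "h > 0" unfolding h_def grid_h_def using assms(1) by simp
  have hp: "h powr \<alpha> > 0" using h by simp
  have mu: "mu = dt / h powr \<alpha>" unfolding mu_def mu_par_def h_def ..
  have mup: "mu > 0" using mu hp assms(6) by simp
  have ba: "(b - a) powr \<alpha> = (real M + 1) powr \<alpha> * h powr \<alpha>"
  proof -
    have "b - a = (real M + 1) * h" unfolding h_def grid_h_def by simp
    then show ?thesis using h by (simp add: powr_mult)
  qed
  have car: "tau_mat a b M dt \<alpha> \<in> carrier_mat M M"
    unfolding tau_mat_def T1_mat_def HC_mat_def T0_mat_def H_mat_def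
    by (rule minus_carrier_mat) simp
  have ent: "tau_mat a b M dt \<alpha> $$ (i, l) = mu * (c (int i - int l) - Hc c (int M) (int i + 1) (int l + 1))"
    if "i < M" "l < M" for i l
    using that unfolding tau_mat_def T1_mat_def HC_mat_def T0_mat_def H_mat_def mu_def c_def Hc_def Let_def
    by (simp add: algebra_simps)
  obtain j where j: "j \<in> {1..M}" and lam: "lam = mu * fM c M (real j * pi / (real M + 1))"
    using eig_char[where c=c and M=M and A="tau_mat a b M dt \<alpha>" and mu=mu and lam=lam] fc_even car ent assms(3,7)
    unfolding c_def by auto
  define x where "x = real j * pi / (real M + 1)"
  have x: "0 < x" "x < pi"
  proof -
    have "real j < real M + 1" "real j > 0" using j by auto
    moreover have "pi * real j < pi * (real M + 1)" using calculation by simp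
    ultimately show "0 < x" "x < pi" unfolding x_def by (auto simp: field_simps)
  qed
  have M2: "M \<ge> 2" using assms(3) by simp
  note FB = F_bounds[OF assms(4,5) M2 x]
  have c0: "Gamma (\<alpha> + 1) / Gamma (\<alpha>/2 + 1)^2 = c 0" unfolding c_def frac_coeff_def by (simp add: power2_eq_square)
  have "2 * dt * theta_const \<alpha> / (b - a) powr \<alpha> = mu * (2 * theta_const \<alpha> / (real M + 1) powr \<alpha>)"
    unfolding ba mu using hp by (simp add: field_simps)
  also have "\<dots> < lam" unfolding lam x_def[symmetric] c_def using mult_strict_left_mono[OF FB(1) mup] by simp
  finally have L: "2 * dt * theta_const \<alpha> / (b - a) powr \<alpha> < lam" .
  have "lam < mu * (2 * c 0 - 2 * theta_const \<alpha> / (real M + 1) powr \<alpha> - c 2)"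
    unfolding lam x_def[symmetric] c_def using mult_strict_left_mono[OF FB(2) mup] by simp
  also have "\<dots> = 2 * dt / h powr \<alpha> * (c 0 - theta_const \<alpha> * h powr \<alpha> / (b - a) powr \<alpha>) - c 2 * dt / h powr \<alpha>"
    unfolding ba mu using hp by (simp add: field_simps)
  finally have R: "lam < 2 * dt / h powr \<alpha> * (c 0 - theta_const \<alpha> * h powr \<alpha> / (b - a) powr \<alpha>) - c 2 * dt / h powr \<alpha>" .
  show ?thesis using L R unfolding c0 h_def c_def by simp
qed

end
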